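(* Let $X_{0-}$ be a real-valued random variable with a bounded density $V_{0-}$, and let $Y^1,Y^2$ be càdlàg stochastic processes on $[0,\infty)$ such that $X_{0-}$ is independent of $(Y^1,Y^2)$. Then for every $t\ge0$, $\left|\mathbb{P}\left(\inf_{0\le s\le t}(X_{0-}+Y^1_s)\le0\right)-\mathbb{P}\left(\inf_{0\le s\le t}(X_{0-}+Y^2_s)\le0\right)\right|\le\|V_{0-}\|_\infty\,\mathbb{E}\left[\sup_{0\le s\le t}|Y^1_s-Y^2_s|\right]$. *)

theory Defs
  imports "HOL-Probability.Probability"
begin

definition cadlag_on_nonneg :: "(real \<Rightarrow> real) \<Rightarrow> bool" where
  "cadlag_on_nonneg f \<longleftrightarrow>
     (\<forall>s\<ge>0. (f \<longlongrightarrow> f s) (at_right s)) \<and>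
     (\<forall>s>0. \<exists>l. (f \<longlongrightarrow> l) (at_left s))"

text \<open>Independence of two random variables with possibly different codomains
  (the library's indep_var requires equal codomain types): the sigma-algebras
  they generate are independent.\<close>
definition indep_rvs :: "'a measure \<Rightarrow> 'b measure \<Rightarrow> ('a \<Rightarrow> 'b) \<Rightarrow> 'c measure \<Rightarrow> ('a \<Rightarrow> 'c) \<Rightarrow> bool" where
  "indep_rvs M Ma X Mb Y \<longleftrightarrow>
     X \<in> measurable M Ma \<and> Y \<in> measurable M Mb \<and>
     prob_space.indep_set M {X -` A \<inter> space M | A. A \<in> sets Ma}
                            {Y -` B \<inter> space M | B. B \<in> sets Mb}"

end

theory Submission
  imports Defs
begin

lemma cadlag_bdd:
  fixes f :: "real \<Rightarrow> real"
  assumes "cadlag_on_nonneg f"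
  shows "\<exists>K. \<forall>s\<in>{0..t}. \<bar>f s\<bar> \<le> K"
proof -
  have loc: "\<exists>p::real\<times>real\<times>real. fst p < s \<and> s < fst (snd p) \<and>
       (\<forall>y. fst p < y \<and> y < fst (snd p) \<and> 0 \<le> y \<longrightarrow> \<bar>f y\<bar> \<le> snd (snd p))"
    if s: "s \<in> {0..t}" for s
  proof -
    from s have "(f \<longlongrightarrow> f s) (at_right s)" using assms unfolding cadlag_on_nonneg_def by auto
    then have "eventually (\<lambda>y. dist (f y) (f s) < 1) (at_right s)"
      by (simp add: tendsto_iff)
    then obtain b where b: "b > s" "\<And>y. y > s \<Longrightarrow> y < b \<Longrightarrow> \<bar>f y - f s\<bar> < 1"
      unfolding eventually_at_right_field dist_real_def by blast
    show ?thesis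
    proof (cases "s > 0")
      case True
      then obtain l where "(f \<longlongrightarrow> l) (at_left s)" using assms unfolding cadlag_on_nonneg_def by auto
      then have "eventually (\<lambda>y. dist (f y) l < 1) (at_left s)"
        by (simp add: tendsto_iff)
      then obtain a where a: "a < s" "\<And>y. y > a \<Longrightarrow> y < s \<Longrightarrow> \<bar>f y - l\<bar> < 1"
        unfolding eventually_at_left_field dist_real_def by blast
      show ?thesis
        apply (rule exI[of _ "(a, b, max (\<bar>f s\<bar> + 1) (\<bar>l\<bar> + 1))"])
      proof (intro conjI allI impI; simp?)
        fix y assume y: "a < y \<and> y < b \<and> 0 \<le> y"
        show "\<bar>f y\<bar> \<le> max (\<bar>f s\<bar> + 1) (\<bar>l\<bar> + 1)"
        proof (cases "y < s")
          case True then show ?thesis using a(2)[of y] y by linarith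
        next
          case False
          show ?thesis
          proof (cases "y = s")
            case True then show ?thesis by simp
          next
            case False2: False
            then show ?thesis using b(2)[of y] y False by linarith
          qed
        qed
      qed (use a b in auto)
    next
      case False
      show ?thesis
        apply (rule exI[of _ "(s - 1, b, \<bar>f s\<bar> + 1)"])
      proof (intro conjI allI impI; simp?)
        fix y assume y: "s - 1 < y \<and> y < b \<and> 0 \<le> y"
        show "\<bar>f y\<bar> \<le> \<bar>f s\<bar> + 1"
        proof (cases "y = s")
          case True then show ?thesis by simp
        next
          case False2: False
          then show ?thesis using b(2)[of y] y False s by auto
        qed
      qed (use b in auto)
    qed
  qed
  then obtain P where P: "\<And>s. s \<in> {0..t} \<Longrightarrow> fst (P s) < s \<and> s < fst (snd (P s)) \<and>
       (\<forall>y. fst (P s) < y \<and> y < fst (snd (P s)) \<and> 0 \<le> y \<longrightarrow> \<bar>f y\<bar> \<le> snd (snd (P s)))"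
    by metis
  have "compact {0..t}" by simp
  then obtain S' where S': "S' \<subseteq> {0..t}" "finite S'"
     "{0..t} \<subseteq> (\<Union>c\<in>S'. {fst (P c)<..<fst (snd (P c))})"
    apply (rule compactE_image[where C="{0..t}" and f="\<lambda>c. {fst (P c)<..<fst (snd (P c))}"])
    using P by auto
  show ?thesis
  proof (rule exI[of _ "\<Sum>c\<in>S'. \<bar>snd (snd (P c))\<bar>"], intro ballI)
    fix s assume s: "s \<in> {0..t}"
    then obtain c where c: "c \<in> S'" "s \<in> {fst (P c)<..<fst (snd (P c))}" using S' by blast
    have cc: "c \<in> {0..t}" using c S' by auto
    have H: "\<forall>y. fst (P c) < y \<and> y < fst (snd (P c)) \<and> 0 \<le> y \<longrightarrow> \<bar>f y\<bar> \<le> snd (snd (P c))"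
      using P[OF cc] by blast
    have "\<bar>f s\<bar> \<le> snd (snd (P c))" using H c(2) s by simp
    then have "\<bar>f s\<bar> \<le> \<bar>snd (snd (P c))\<bar>" by linarith
    also have "\<dots> \<le> (\<Sum>c\<in>S'. \<bar>snd (snd (P c))\<bar>)"
      by (rule member_le_sum) (use c S' in auto)
    finally show "\<bar>f s\<bar> \<le> (\<Sum>c\<in>S'. \<bar>snd (snd (P c))\<bar>)" .
  qed
qed

lemma bdd_below_of_abs: "\<forall>s\<in>A. \<bar>f s\<bar> \<le> (K::real) \<Longrightarrow> bdd_below (f ` A)"
  by (rule bdd_belowI[of _ "-K"]) force

lemma bdd_above_of_abs: "\<forall>s\<in>A. \<bar>f s\<bar> \<le> (K::real) \<Longrightarrow> bdd_above (f ` A)"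
  by (rule bdd_aboveI[of _ "K"]) force

definition Dset :: "real \<Rightarrow> real set" where "Dset t = insert t ({0..t} \<inter> \<rat>)"

lemma countable_Dset: "countable (Dset t)"
  unfolding Dset_def by (simp add: countable_rat)

lemma Dset_sub: "t \<ge> 0 \<Longrightarrow> Dset t \<subseteq> {0..t}"
  unfolding Dset_def by auto

lemma inf_Dset:
  fixes f :: "real \<Rightarrow> real"
  assumes cd: "cadlag_on_nonneg f" and t: "t \<ge> 0"
  shows "(INF s\<in>{0..t}. f s) = (INF q\<in>Dset t. f q)"
proof -
  obtain K where K: "\<forall>s\<in>{0..t}. \<bar>f s\<bar> \<le> K" using cadlag_bdd[OF cd] by blast
  have bA: "bdd_below (f ` {0..t})" by (rule bdd_below_of_abs[OF K])
  have KD: "\<forall>s\<in>Dset t. \<bar>f s\<bar> \<le> K" using K Dset_sub[OF t] by blast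
  have bD: "bdd_below (f ` Dset t)" by (rule bdd_below_of_abs[OF KD])
  have ne: "Dset t \<noteq> {}" unfolding Dset_def by auto
  have tD: "t \<in> Dset t" unfolding Dset_def by auto
  show ?thesis
  proof (rule antisym)
    show "(INF s\<in>{0..t}. f s) \<le> (INF q\<in>Dset t. f q)"
      by (rule cINF_superset_mono[OF ne bA Dset_sub[OF t]]) auto
  next
    show "(INF q\<in>Dset t. f q) \<le> (INF s\<in>{0..t}. f s)"
    proof (rule cINF_greatest)
      show "{0..t} \<noteq> {}" using t by auto
    next
      fix s assume s: "s \<in> {0..t}"
      show "(INF q\<in>Dset t. f q) \<le> f s"
      proof (cases "s = t")
        case True then show ?thesis using cINF_lower[OF bD tD] by simp
      next
        case False
        with s have st: "s < t" by auto
        show ?thesis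
        proof (rule field_le_epsilon)
          fix e :: real assume e: "0 < e"
          from s have "(f \<longlongrightarrow> f s) (at_right s)" using cd unfolding cadlag_on_nonneg_def by auto
          then have "eventually (\<lambda>y. dist (f y) (f s) < e) (at_right s)"
            using e by (simp add: tendsto_iff)
          then obtain b where b: "b > s" "\<And>y. y > s \<Longrightarrow> y < b \<Longrightarrow> \<bar>f y - f s\<bar> < e"
            unfolding eventually_at_right_field dist_real_def by blast
          have "s < min b t" using b st by auto
          then obtain q where q: "q \<in> \<rat>" "s < q" "q < min b t" using Rats_dense_in_real by blast
          have qD: "q \<in> Dset t" using q s unfolding Dset_def by auto
          have "(INF q\<in>Dset t. f q) \<le> f q" by (rule cINF_lower[OF bD qD])
          also have "\<dots> \<le> f s + e" using b(2)[of q] q by auto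
          finally show "(INF q\<in>Dset t. f q) \<le> f s + e" .
        qed
      qed
    qed
  qed
qed

lemma inf_add_const:
  fixes f :: "'b \<Rightarrow> real"
  assumes "A \<noteq> {}" "bdd_below (f ` A)"
  shows "(INF s\<in>A. x + f s) = x + (INF s\<in>A. f s)"
proof (rule antisym)
  have b2: "bdd_below ((\<lambda>s. x + f s) ` A)"
    using assms(2) unfolding bdd_below_def by (auto intro: add_left_mono)
  show "(INF s\<in>A. x + f s) \<le> x + (INF s\<in>A. f s)"
  proof -
    have "(INF s\<in>A. x + f s) - x \<le> (INF s\<in>A. f s)"
      by (rule cINF_greatest[OF assms(1)]) (use cINF_lower[OF b2] in force)
    then show ?thesis by linarith
  qed
  show "x + (INF s\<in>A. f s) \<le> (INF s\<in>A. x + f s)"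
    by (rule cINF_greatest[OF assms(1)]) (use cINF_lower[OF assms(2)] in force)
qed

lemma inf_diff_le_sup1:
  fixes f1 f2 :: "'b \<Rightarrow> real"
  assumes ne: "A \<noteq> {}" and b1: "bdd_below (f1 ` A)" and b2: "bdd_below (f2 ` A)"
  shows "ennreal ((INF s\<in>A. f1 s) - (INF s\<in>A. f2 s)) \<le> (SUP s\<in>A. ennreal \<bar>f1 s - f2 s\<bar>)"
proof (rule ennreal_le_epsilon)
  fix e :: real assume e: "0 < e"
  have "(INF s\<in>A. f2 s) < (INF s\<in>A. f2 s) + e" using e by simp
  then obtain s where s: "s \<in> A" "f2 s < (INF s\<in>A. f2 s) + e"
    using cINF_less_iff[OF ne b2] by blast
  have "(INF s\<in>A. f1 s) \<le> f1 s" by (rule cINF_lower[OF b1 s(1)])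
  then have "(INF s\<in>A. f1 s) - (INF s\<in>A. f2 s) \<le> \<bar>f1 s - f2 s\<bar> + e" using s by linarith
  then have "ennreal ((INF s\<in>A. f1 s) - (INF s\<in>A. f2 s)) \<le> ennreal (\<bar>f1 s - f2 s\<bar> + e)"
    by (rule ennreal_leI)
  also have "\<dots> = ennreal \<bar>f1 s - f2 s\<bar> + ennreal e" using e by (simp add: ennreal_plus)
  also have "\<dots> \<le> (SUP s\<in>A. ennreal \<bar>f1 s - f2 s\<bar>) + ennreal e"
    by (intro add_right_mono SUP_upper s(1))
  finally show "ennreal ((INF s\<in>A. f1 s) - (INF s\<in>A. f2 s)) \<le> (SUP s\<in>A. ennreal \<bar>f1 s - f2 s\<bar>) + ennreal e" .
qed

lemma inf_diff_le_sup:
  fixes f1 f2 :: "'b \<Rightarrow> real"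
  assumes ne: "A \<noteq> {}" and b1: "bdd_below (f1 ` A)" and b2: "bdd_below (f2 ` A)"
  shows "ennreal \<bar>(INF s\<in>A. f1 s) - (INF s\<in>A. f2 s)\<bar> \<le> (SUP s\<in>A. ennreal \<bar>f1 s - f2 s\<bar>)"
proof (cases "(INF s\<in>A. f1 s) \<ge> (INF s\<in>A. f2 s)")
  case True then show ?thesis using inf_diff_le_sup1[OF ne b1 b2] by simp
next
  case False
  then have "ennreal \<bar>(INF s\<in>A. f1 s) - (INF s\<in>A. f2 s)\<bar> = ennreal ((INF s\<in>A. f2 s) - (INF s\<in>A. f1 s))"
    by simp
  also have "\<dots> \<le> (SUP s\<in>A. ennreal \<bar>f2 s - f1 s\<bar>)" by (rule inf_diff_le_sup1[OF ne b2 b1])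
  also have "\<dots> = (SUP s\<in>A. ennreal \<bar>f1 s - f2 s\<bar>)" by (simp add: abs_minus_commute)
  finally show ?thesis .
qed

theorem lemma3p10:
  fixes M :: "'a measure"
    and X :: "'a \<Rightarrow> real"
    and V :: "real \<Rightarrow> ennreal"
    and Y1 Y2 :: "real \<Rightarrow> 'a \<Rightarrow> real"
    and C t :: real
  assumes "prob_space M"
    and density: "distributed M lborel X V"
    and bound: "AE x in lborel. V x \<le> ennreal C"
    and "C \<ge> 0"
    and rv1: "\<And>s. Y1 s \<in> borel_measurable M"
    and rv2: "\<And>s. Y2 s \<in> borel_measurable M"
    and cadlag1: "\<And>\<omega>. \<omega> \<in> space M \<Longrightarrow> cadlag_on_nonneg (\<lambda>s. Y1 s \<omega>)"
    and cadlag2: "\<And>\<omega>. \<omega> \<in> space M \<Longrightarrow> cadlag_on_nonneg (\<lambda>s. Y2 s \<omega>)"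
    and indep: "indep_rvs M borel X
                  (PiM {0..} (\<lambda>_. borel \<Otimes>\<^sub>M borel))
                  (\<lambda>\<omega>. \<lambda>s\<in>{0..}. (Y1 s \<omega>, Y2 s \<omega>))"
    and "t \<ge> 0"
  shows "ennreal \<bar>measure M {\<omega>\<in>space M. (INF s\<in>{0..t}. X \<omega> + Y1 s \<omega>) \<le> 0}
                 - measure M {\<omega>\<in>space M. (INF s\<in>{0..t}. X \<omega> + Y2 s \<omega>) \<le> 0}\<bar>
         \<le> ennreal C * (\<integral>\<^sup>+ \<omega>. (SUP s\<in>{0..t}. ennreal \<bar>Y1 s \<omega> - Y2 s \<omega>\<bar>) \<partial>M)"
proof -
  interpret P: prob_space M by fact
  let ?PI = "PiM {0..} (\<lambda>_::real. borel \<Otimes>\<^sub>M (borel :: real measure))"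
  define Z where "Z = (\<lambda>\<omega>. \<lambda>s\<in>{0::real..}. (Y1 s \<omega>, Y2 s \<omega>))"
  define I1 where "I1 \<omega> = (INF q\<in>Dset t. Y1 q \<omega>)" for \<omega>
  define I2 where "I2 \<omega> = (INF q\<in>Dset t. Y2 q \<omega>)" for \<omega>
  define W where "W \<omega> = (I1 \<omega>, I2 \<omega>)" for \<omega>
  define g where "g p = (INF q\<in>Dset t. fst (p q), INF q\<in>Dset t. snd (p q))" for p :: "real \<Rightarrow> real \<times> real"
  have Xm[measurable]: "X \<in> borel_measurable M" and Zm: "Z \<in> measurable M ?PI"
   and ind: "P.indep_set {X -` A \<inter> space M | A. A \<in> sets borel} {Z -` B \<inter> space M | B. B \<in> sets ?PI}"
    using indep unfolding indep_rvs_def Z_def by auto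
  have I1m[measurable]: "I1 \<in> borel_measurable M"
    unfolding I1_def by (rule borel_measurable_cINF_real[OF countable_Dset rv1])
  have I2m[measurable]: "I2 \<in> borel_measurable M"
    unfolding I2_def by (rule borel_measurable_cINF_real[OF countable_Dset rv2])
  have Wm[measurable]: "W \<in> borel_measurable M"
    unfolding W_def by measurable
  have gm: "g \<in> borel_measurable ?PI"
  proof -
    have c: "(\<lambda>p. p q) \<in> measurable ?PI (borel \<Otimes>\<^sub>M borel)" if "q \<in> Dset t" for q
      by (rule measurable_component_singleton) (use that Dset_sub[OF \<open>t \<ge> 0\<close>] in auto)
    have "g \<in> measurable ?PI (borel \<Otimes>\<^sub>M borel)"
      unfolding g_def
      by (intro measurable_Pair borel_measurable_cINF_real countable_Dset
            measurable_compose[OF c measurable_fst] measurable_compose[OF c measurable_snd])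
    then show ?thesis by (simp add: borel_prod)
  qed
  have WgZ: "W \<omega> = g (Z \<omega>)" if "\<omega> \<in> space M" for \<omega>
  proof -
    have "\<And>q. q \<in> Dset t \<Longrightarrow> Z \<omega> q = (Y1 q \<omega>, Y2 q \<omega>)"
      using Dset_sub[OF \<open>t \<ge> 0\<close>] unfolding Z_def by auto
    then show ?thesis unfolding W_def g_def I1_def I2_def by (auto intro!: INF_cong)
  qed
  have indeq: "\<forall>a\<in>{X -` A \<inter> space M | A. A \<in> sets borel}. \<forall>b\<in>{Z -` B \<inter> space M | B. B \<in> sets ?PI}.
      P.prob (a \<inter> b) = P.prob a * P.prob b"
    by (rule conjunct2[OF conjunct2[OF P.indep_sets2_eq[THEN iffD1, OF ind]]])
  define \<mu> where "\<mu> = distr M borel X"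
  define \<nu> where "\<nu> = distr M borel W"
  define J where "J = distr M (borel \<Otimes>\<^sub>M borel) (\<lambda>\<omega>. (X \<omega>, W \<omega>))"
  have sf\<mu>: "sigma_finite_measure \<mu>" unfolding \<mu>_def
    by (rule prob_space_imp_sigma_finite, rule P.prob_space_distr[OF Xm])
  have sf\<nu>: "sigma_finite_measure \<nu>" unfolding \<nu>_def
    by (rule prob_space_imp_sigma_finite, rule P.prob_space_distr[OF Wm])
  have prodJ: "\<mu> \<Otimes>\<^sub>M \<nu> = J"
  proof (rule pair_measure_eqI[OF sf\<mu> sf\<nu>])
    show "sets (\<mu> \<Otimes>\<^sub>M \<nu>) = sets J" unfolding \<mu>_def \<nu>_def J_def
      by (simp only: sets_distr) (rule sets_pair_measure_cong; simp)
  next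
    fix A B assume A: "A \<in> sets \<mu>" and B: "B \<in> sets \<nu>"
    then have A': "A \<in> sets borel" and B': "B \<in> sets borel" unfolding \<mu>_def \<nu>_def by auto
    have a: "X -` A \<inter> space M \<in> {X -` A \<inter> space M | A. A \<in> sets borel}" using A' by blast
    have "W -` B \<inter> space M = Z -` (g -` B \<inter> space ?PI) \<inter> space M"
      using WgZ measurable_space[OF Zm] by auto
    moreover have "g -` B \<inter> space ?PI \<in> sets ?PI" using gm B' by (rule measurable_sets)
    ultimately have b: "W -` B \<inter> space M \<in> {Z -` B \<inter> space M | B. B \<in> sets ?PI}" by blast
    have pre: "(\<lambda>\<omega>. (X \<omega>, W \<omega>)) -` (A \<times> B) \<inter> space M = (X -` A \<inter> space M) \<inter> (W -` B \<inter> space M)"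
      by auto
    have "emeasure \<mu> A * emeasure \<nu> B = emeasure M (X -` A \<inter> space M) * emeasure M (W -` B \<inter> space M)"
      unfolding \<mu>_def \<nu>_def using A' B' by (simp add: emeasure_distr)
    also have "\<dots> = ennreal (P.prob (X -` A \<inter> space M) * P.prob (W -` B \<inter> space M))"
      by (simp add: P.emeasure_eq_measure ennreal_mult)
    also have "\<dots> = ennreal (P.prob ((X -` A \<inter> space M) \<inter> (W -` B \<inter> space M)))"
      using indeq a b by simp
    also have "\<dots> = emeasure M ((\<lambda>\<omega>. (X \<omega>, W \<omega>)) -` (A \<times> B) \<inter> space M)"
      unfolding pre by (simp add: P.emeasure_eq_measure)
    also have "\<dots> = emeasure J (A \<times> B)"
      unfolding J_def using A' B' by (subst emeasure_distr) auto
    finally show "emeasure \<mu> A * emeasure \<nu> B = emeasure J (A \<times> B)" .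
  qed
  have path: "(INF s\<in>{0..t}. X \<omega> + Y1 s \<omega>) = X \<omega> + I1 \<omega> \<and>
              (INF s\<in>{0..t}. X \<omega> + Y2 s \<omega>) = X \<omega> + I2 \<omega> \<and>
              ennreal \<bar>I1 \<omega> - I2 \<omega>\<bar> \<le> (SUP s\<in>{0..t}. ennreal \<bar>Y1 s \<omega> - Y2 s \<omega>\<bar>)"
    if \<omega>: "\<omega> \<in> space M" for \<omega>
  proof -
    obtain K1 where K1: "\<forall>s\<in>{0..t}. \<bar>Y1 s \<omega>\<bar> \<le> K1" using cadlag_bdd[OF cadlag1[OF \<omega>], of t] by blast
    obtain K2 where K2: "\<forall>s\<in>{0..t}. \<bar>Y2 s \<omega>\<bar> \<le> K2" using cadlag_bdd[OF cadlag2[OF \<omega>], of t] by blast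
    have ne: "{0..t} \<noteq> {}" using \<open>t \<ge> 0\<close> by auto
    have e1: "I1 \<omega> = (INF s\<in>{0..t}. Y1 s \<omega>)"
      unfolding I1_def by (rule inf_Dset[OF cadlag1[OF \<omega>] \<open>t \<ge> 0\<close>, symmetric])
    have e2: "I2 \<omega> = (INF s\<in>{0..t}. Y2 s \<omega>)"
      unfolding I2_def by (rule inf_Dset[OF cadlag2[OF \<omega>] \<open>t \<ge> 0\<close>, symmetric])
    show ?thesis
      unfolding e1 e2
      using inf_add_const[OF ne bdd_below_of_abs[OF K1]] inf_add_const[OF ne bdd_below_of_abs[OF K2]]
        inf_diff_le_sup[OF ne bdd_below_of_abs[OF K1] bdd_below_of_abs[OF K2]]
      by simp
  qed
  define E1 where "E1 = {\<omega>\<in>space M. X \<omega> + I1 \<omega> \<le> 0}"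
  define E2 where "E2 = {\<omega>\<in>space M. X \<omega> + I2 \<omega> \<le> 0}"
  define B where "B = {\<omega>\<in>space M. min (- I1 \<omega>) (- I2 \<omega>) < X \<omega> \<and> X \<omega> \<le> max (- I1 \<omega>) (- I2 \<omega>)}"
  have E1eq: "{\<omega>\<in>space M. (INF s\<in>{0..t}. X \<omega> + Y1 s \<omega>) \<le> 0} = E1"
    unfolding E1_def using path by auto
  have E2eq: "{\<omega>\<in>space M. (INF s\<in>{0..t}. X \<omega> + Y2 s \<omega>) \<le> 0} = E2"
    unfolding E2_def using path by auto
  have [measurable]: "E1 \<in> sets M" "E2 \<in> sets M" "B \<in> sets M"
    unfolding E1_def E2_def B_def by measurable
  have "P.prob E1 \<le> P.prob (E2 \<union> B)"
    by (rule P.finite_measure_mono) (auto simp: E1_def E2_def B_def)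
  also have "\<dots> \<le> P.prob E2 + P.prob B" by (rule measure_subadditive) (auto simp: P.emeasure_eq_measure)
  finally have d1: "P.prob E1 \<le> P.prob E2 + P.prob B" .
  have "P.prob E2 \<le> P.prob (E1 \<union> B)"
    by (rule P.finite_measure_mono) (auto simp: E1_def E2_def B_def)
  also have "\<dots> \<le> P.prob E1 + P.prob B" by (rule measure_subadditive) (auto simp: P.emeasure_eq_measure)
  finally have d2: "P.prob E2 \<le> P.prob E1 + P.prob B" .
  have step1: "ennreal \<bar>P.prob E1 - P.prob E2\<bar> \<le> emeasure M B"
    using d1 d2 by (simp add: P.emeasure_eq_measure ennreal_leI)
  define S where "S = {z :: real \<times> real \<times> real. min (- fst (snd z)) (- snd (snd z)) < fst z \<and> fst z \<le> max (- fst (snd z)) (- snd (snd z))}"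
  have Sm: "S \<in> sets (borel \<Otimes>\<^sub>M borel)"
  proof -
    have o: "open {z::real\<times>real\<times>real. min (- fst (snd z)) (- snd (snd z)) < fst z}"
      by (intro open_Collect_less continuous_intros)
    have c: "closed {z::real\<times>real\<times>real. fst z \<le> max (- fst (snd z)) (- snd (snd z))}"
      by (intro closed_Collect_le continuous_intros)
    have "S = {z::real\<times>real\<times>real. min (- fst (snd z)) (- snd (snd z)) < fst z} \<inter>
              {z::real\<times>real\<times>real. fst z \<le> max (- fst (snd z)) (- snd (snd z))}"
      unfolding S_def by auto
    then have "S \<in> sets borel" using o c by auto
    then show ?thesis unfolding borel_prod .
  qed
  have preS: "(\<lambda>\<omega>. (X \<omega>, W \<omega>)) -` S \<inter> space M = B"
    by (auto simp: B_def S_def W_def)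
  have "emeasure M B = emeasure J S"
    unfolding J_def using Sm by (subst emeasure_distr) (auto simp: preS)
  also have "\<dots> = emeasure (\<mu> \<Otimes>\<^sub>M \<nu>) S" by (simp add: prodJ)
  also have "\<dots> = (\<integral>\<^sup>+w. emeasure \<mu> ((\<lambda>x. (x, w)) -` S) \<partial>\<nu>)"
  proof -
    interpret ps: pair_sigma_finite \<mu> \<nu> using sf\<mu> sf\<nu> by (simp add: pair_sigma_finite_def)
    show ?thesis using Sm by (intro ps.emeasure_pair_measure_alt2) (simp add: \<mu>_def \<nu>_def)
  qed
  also have "\<dots> \<le> (\<integral>\<^sup>+w. ennreal C * ennreal \<bar>fst w - snd w\<bar> \<partial>\<nu>)"
  proof (rule nn_integral_mono)
    fix w :: "real \<times> real"
    let ?a = "min (- fst w) (- snd w)" and ?b = "max (- fst w) (- snd w)"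
    have sl: "(\<lambda>x. (x, w)) -` S = {?a<..?b}" unfolding S_def by auto
    have ab: "?a \<le> ?b" by simp
    have "emeasure \<mu> {?a<..?b} = emeasure (density lborel V) {?a<..?b}"
    proof -
      have "emeasure \<mu> {?a<..?b} = emeasure M (X -` {?a<..?b} \<inter> space M)"
        unfolding \<mu>_def by (simp add: emeasure_distr)
      also have "\<dots> = emeasure (distr M lborel X) {?a<..?b}"
        by (subst emeasure_distr) (auto simp: measurable_lborel1)
      also have "\<dots> = emeasure (density lborel V) {?a<..?b}"
        using density unfolding distributed_def by simp
      finally show ?thesis .
    qed
    also have "\<dots> = (\<integral>\<^sup>+x. V x * indicator {?a<..?b} x \<partial>lborel)"
      using density unfolding distributed_def by (subst emeasure_density) auto
    also have "\<dots> \<le> (\<integral>\<^sup>+x. ennreal C * indicator {?a<..?b} x \<partial>lborel)"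
      by (rule nn_integral_mono_AE) (use bound in \<open>auto elim!: eventually_mono intro: mult_right_mono\<close>)
    also have "\<dots> = ennreal C * emeasure lborel {?a<..?b}"
      by (subst nn_integral_cmult_indicator) auto
    also have "\<dots> = ennreal C * ennreal \<bar>fst w - snd w\<bar>"
      using ab by (simp add: max_def min_def abs_if)
    finally show "emeasure \<mu> ((\<lambda>x. (x, w)) -` S) \<le> ennreal C * ennreal \<bar>fst w - snd w\<bar>"
      unfolding sl .
  qed
  also have "\<dots> = (\<integral>\<^sup>+\<omega>. ennreal C * ennreal \<bar>I1 \<omega> - I2 \<omega>\<bar> \<partial>M)"
  proof -
    have "(\<lambda>w::real\<times>real. ennreal C * ennreal \<bar>fst w - snd w\<bar>) \<in> borel_measurable (borel \<Otimes>\<^sub>M borel)"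
      by measurable
    then have mm: "(\<lambda>w::real\<times>real. ennreal C * ennreal \<bar>fst w - snd w\<bar>) \<in> borel_measurable borel"
      unfolding borel_prod .
    show ?thesis
      unfolding \<nu>_def by (subst nn_integral_distr[OF Wm]) (simp_all add: mm W_def)
  qed
  also have "\<dots> = ennreal C * (\<integral>\<^sup>+\<omega>. ennreal \<bar>I1 \<omega> - I2 \<omega>\<bar> \<partial>M)"
    by (rule nn_integral_cmult) measurable
  also have "\<dots> \<le> ennreal C * (\<integral>\<^sup>+ \<omega>. (SUP s\<in>{0..t}. ennreal \<bar>Y1 s \<omega> - Y2 s \<omega>\<bar>) \<partial>M)"
    by (intro mult_left_mono nn_integral_mono) (use path in auto)
  finally have step2: "emeasure M B \<le> ennreal C * (\<integral>\<^sup>+ \<omega>. (SUP s\<in>{0..t}. ennreal \<bar>Y1 s \<omega> - Y2 s \<omega>\<bar>) \<partial>M)" .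
  show ?thesis unfolding E1eq E2eq using step1 step2 by (rule order_trans)
qed

end
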